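(* Let $1\le k<n$, let $C$ be an $n\times n$ pairwise comparison matrix whose upper-left $k\times k$ submatrix $C_k$ is consistent (equivalently $\mathit{CI}(C_k)=0$ when $k\ge2$). Then the matrix $A_k=I_k-\frac{1}{n-1}(C_k-I_k)$ is invertible, so the arithmetic HRE system $A_k w=b$ with $b_i=\frac{1}{n-1}\sum_{j=k+1}^n c_{ij}w(a_j)$ ($i=1,\dots,k$) has a unique solution for any positive reference weights $w(a_{k+1}),\dots,w(a_n)$.
   Context: A pairwise comparison matrix is a square matrix with positive entries, $c_{ii}=1$ and $c_{ij}=1/c_{ji}$. It is consistent if $c_{ij}c_{jl}=c_{il}$ for all indices $i,j,l$. For a $k\times k$ pairwise comparison matrix $M$ ($k\ge 2$), $\mathit{CI}(M)=\frac{\rho(M)-k}{k-1}$ with $\rho$ the spectral radius. *)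

theory Defs
  imports "Jordan_Normal_Form.Matrix"
begin

(* Matrices are 0-indexed: entry c_{ij} (1-based) is C $$ (i-1, j-1). *)

definition pairwise_comparison_matrix :: "real mat \<Rightarrow> bool" where
  "pairwise_comparison_matrix C \<longleftrightarrow> dim_row C = dim_col C \<and>
     (\<forall>i < dim_row C. \<forall>j < dim_row C. C $$ (i,j) > 0 \<and> C $$ (i,j) = 1 / C $$ (j,i)) \<and>
     (\<forall>i < dim_row C. C $$ (i,i) = 1)"

definition consistent_pcm :: "real mat \<Rightarrow> bool" where
  "consistent_pcm C \<longleftrightarrow> pairwise_comparison_matrix C \<and>
     (\<forall>i < dim_row C. \<forall>j < dim_row C. \<forall>l < dim_row C. C $$ (i,j) * C $$ (j,l) = C $$ (i,l))"

definition upper_left :: "nat \<Rightarrow> real mat \<Rightarrow> real mat" where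
  "upper_left k C = mat k k (\<lambda>(i,j). C $$ (i,j))"

definition hre_matrix :: "nat \<Rightarrow> nat \<Rightarrow> real mat \<Rightarrow> real mat" where
  "hre_matrix n k C = 1\<^sub>m k - (1 / (real n - 1)) \<cdot>\<^sub>m (upper_left k C - 1\<^sub>m k)"

(* b_i = 1/(n-1) sum_{j=k+1}^n c_ij w(a_j), with reference weights wr j for j in {k..<n} (0-based) *)
definition hre_rhs :: "nat \<Rightarrow> nat \<Rightarrow> real mat \<Rightarrow> (nat \<Rightarrow> real) \<Rightarrow> real vec" where
  "hre_rhs n k C wr = vec k (\<lambda>i. (1 / (real n - 1)) * (\<Sum>j\<in>{k..<n}. C $$ (i,j) * wr j))"

end

theory Submission
  imports Defs "Jordan_Normal_Form.Determinant"
begin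

lemma hre_entry:
  assumes "w \<in> carrier_vec k" "i < k"
  shows "(hre_matrix n k C *\<^sub>v w) $ i =
     (1 + 1 / (real n - 1)) * w $ i - (1 / (real n - 1)) * (\<Sum>j<k. C $$ (i,j) * w $ j)"
proof -
  let ?t = "1 / (real n - 1)"
  have "(hre_matrix n k C *\<^sub>v w) $ i = (\<Sum>j<k. ((if i = j then 1 else 0) - ?t * (C $$ (i,j) - (if i = j then 1 else 0))) * w $ j)"
    using assms unfolding hre_matrix_def upper_left_def
    by (auto simp: mult_mat_vec_def scalar_prod_def lessThan_atLeast0 intro!: sum.cong)
  also have "\<dots> = (\<Sum>j<k. (1 + ?t) * ((if i = j then 1 else 0) * w $ j) - ?t * (C $$ (i,j) * w $ j))"
    by (rule sum.cong) (auto simp: algebra_simps)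
  also have "\<dots> = (1 + ?t) * w $ i - ?t * (\<Sum>j<k. C $$ (i,j) * w $ j)"
  proof -
    have "(\<Sum>j<k. (if i = j then 1 else 0) * w $ j) = w $ i"
      using assms by (simp add: if_distrib[of "\<lambda>x. x * _"] cong: if_cong)
    then show ?thesis
      by (simp add: sum_subtractf sum_distrib_left[symmetric] sum_divide_distrib)
  qed
  finally show ?thesis .
qed

lemma hre_inj:
  assumes k1: "1 \<le> k" and kn: "k < n"
    and pcm: "pairwise_comparison_matrix C" and Cc: "C \<in> carrier_mat n n"
    and cons: "consistent_pcm (upper_left k C)"
    and w: "w \<in> carrier_vec k" and A0: "hre_matrix n k C *\<^sub>v w = 0\<^sub>v k"
  shows "w = 0\<^sub>v k"
proof -
  define t where "t = 1 / (real n - 1)"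
  have n2: "real n - 1 > 0" using k1 kn by linarith
  have t0: "t > 0" unfolding t_def using n2 by simp
  have ck: "C $$ (i,j) * C $$ (j,l) = C $$ (i,l)" if "i<k" "j<k" "l<k" for i j l
  proof -
    have "\<forall>i < dim_row (upper_left k C). \<forall>j < dim_row (upper_left k C). \<forall>l < dim_row (upper_left k C).
      upper_left k C $$ (i,j) * upper_left k C $$ (j,l) = upper_left k C $$ (i,l)"
      using cons unfolding consistent_pcm_def by blast
    hence "upper_left k C $$ (i,j) * upper_left k C $$ (j,l) = upper_left k C $$ (i,l)"
      using that unfolding upper_left_def by simp
    thus ?thesis using that unfolding upper_left_def by simp
  qed
  have cd: "C $$ (i,i) = 1" if "i < k" for i
  proof -
    have "\<forall>i < dim_row C. C $$ (i,i) = 1"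
      using pcm unfolding pairwise_comparison_matrix_def by blast
    thus ?thesis using that kn Cc by simp
  qed
  define S where "S = (\<Sum>j<k. C $$ (0,j) * w $ j)"
  have eq: "(1 + t) * w $ i = t * C $$ (i,0) * S" if "i < k" for i
  proof -
    have "(hre_matrix n k C *\<^sub>v w) $ i = 0" using A0 that by simp
    hence "(1 + t) * w $ i = t * (\<Sum>j<k. C $$ (i,j) * w $ j)"
      using hre_entry[OF w that, of n C] unfolding t_def by simp
    also have "(\<Sum>j<k. C $$ (i,j) * w $ j) = (\<Sum>j<k. C $$ (i,0) * (C $$ (0,j) * w $ j))"
      using ck[of i 0] that k1 by (intro sum.cong) (auto simp: mult.assoc[symmetric])
    also have "\<dots> = C $$ (i,0) * S" unfolding S_def by (simp add: sum_distrib_left)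
    finally show ?thesis by simp
  qed
  have "(1 + t) * S = (\<Sum>i<k. C $$ (0,i) * ((1 + t) * w $ i))"
    unfolding S_def by (simp add: sum_distrib_left algebra_simps)
  also have "\<dots> = (\<Sum>i<k. t * S * (C $$ (0,i) * C $$ (i,0)))"
    by (intro sum.cong) (auto simp: eq)
  also have "\<dots> = (\<Sum>i<k. t * S)"
    using ck[of 0 _ 0] cd[of 0] k1 by (intro sum.cong) auto
  also have "\<dots> = t * real k * S" by simp
  finally have "(1 + t - t * real k) * S = 0" by (simp add: algebra_simps)
  moreover have "1 + t - t * real k > 0"
  proof -
    have "t * (real n - 1) = 1" unfolding t_def using n2 by simp
    hence "1 + t - t * real k = t * (real n - real k)" by (simp add: algebra_simps)
    thus ?thesis using kn t0 by simp
  qed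
  ultimately have S0: "S = 0" by simp
  show ?thesis
  proof (rule eq_vecI)
    fix i assume "i < dim_vec (0\<^sub>v k :: real vec)"
    hence i: "i < k" by simp
    have "(1 + t) * w $ i = 0" using eq[OF i] S0 by simp
    thus "w $ i = 0\<^sub>v k $ i" using t0 i by simp
  qed (use w in simp)
qed


theorem mainTheorem2:
  fixes n k :: nat and C :: "real mat"
  assumes "1 \<le> k" and "k < n"
    and "C \<in> carrier_mat n n"
    and "pairwise_comparison_matrix C"
    and "consistent_pcm (upper_left k C)"
  shows "invertible_mat (hre_matrix n k C) \<and>
         (\<forall>wr :: nat \<Rightarrow> real. (\<forall>j\<in>{k..<n}. wr j > 0) \<longrightarrow>
            (\<exists>!w. w \<in> carrier_vec k \<and> hre_matrix n k C *\<^sub>v w = hre_rhs n k C wr))"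
proof -
  let ?A = "hre_matrix n k C"
  have Ac: "?A \<in> carrier_mat k k" unfolding hre_matrix_def upper_left_def carrier_mat_def by simp
  have "det ?A \<noteq> 0"
    unfolding det_0_iff_vec_prod_zero[OF Ac] using hre_inj[OF assms(1,2,4,3,5)] by blast
  from det_non_zero_imp_unit[OF Ac this, of "()"]
  obtain B where Bc: "B \<in> carrier_mat k k" and BA: "B * ?A = 1\<^sub>m k" and AB: "?A * B = 1\<^sub>m k"
    unfolding Units_def ring_mat_def by auto
  have inv: "invertible_mat ?A"
    unfolding invertible_mat_def inverts_mat_def square_mat.simps using Ac Bc AB BA by auto
  show ?thesis
  proof (intro conjI inv allI impI)
    fix wr :: "nat \<Rightarrow> real"
    let ?b = "hre_rhs n k C wr"
    have bc: "?b \<in> carrier_vec k" unfolding hre_rhs_def by simp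
    show "\<exists>!w. w \<in> carrier_vec k \<and> ?A *\<^sub>v w = ?b"
    proof (rule ex1I[of _ "B *\<^sub>v ?b"])
      show "B *\<^sub>v ?b \<in> carrier_vec k \<and> ?A *\<^sub>v (B *\<^sub>v ?b) = ?b"
        using Bc Ac bc AB by (simp add: assoc_mult_mat_vec[symmetric])
    next
      fix w assume "w \<in> carrier_vec k \<and> ?A *\<^sub>v w = ?b"
      hence w: "w \<in> carrier_vec k" and Aw: "?A *\<^sub>v w = ?b" by auto
      have "w = (B * ?A) *\<^sub>v w" using BA w by simp
      also have "\<dots> = B *\<^sub>v (?A *\<^sub>v w)" using Bc Ac w by (simp add: assoc_mult_mat_vec)
      finally show "w = B *\<^sub>v ?b" using Aw by simp
    qed
  qed
qed

end
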